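(* Let $X$ be the solution of $$\mathrm{d}X(t)=\sum_{m=0}^M\big(A_mX(t)+g_m(t,X(t))\big)\star\mathrm{d}W_m(t),\qquad X(t_0)=x_0,$$ where $A_0,\dots,A_M\in\mathbb{R}^{d\times d}$ pairwise commute. Assume that (a) $A_m$ is skew-symmetric for every $m>0$; (b) $W^n$ and $V^0_n$ are the numerical approximations of $W(t_n)$ and of the globally transformed SDE for $V^0$ obtained by applying some one-step method to its autonomous form (defined in the context), with $W^n_0=W_0(t_n)=t_n$; (c) this approximation is of weak order $\tilde p$: for every $g\in C^{2(\tilde p+1)}_P(\mathbb{R}^{M+1}\times\mathbb{R}^d,\mathbb{R})$ there exists $c\in\mathbb{R}$ such that for all $N\in\mathbb{N}$ and $n\in\{0,\dots,N\}$, $|\mathbb{E}\,g(W^n,V^0_n)-\mathbb{E}\,g(W(t_n),V^0(t_n))|\le ch^{\tilde p}$. Then for every $f\in C^{2(\tilde p+1)}_P(\mathbb{R}^d,\mathbb{R})$ there exists $\tilde c\in\mathbb{R}$ such that $Y_n=e^{\bar L^0_n}V^0_n$ satisfies, for all $N\in\mathbb{N}$ and $n\in\{0,\dots,N\}$, $$|\mathbb{E}f(Y_n)-\mathbb{E}f(X(t_n))|\le\tilde ch^{\tilde p}.$$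
   Context: Setting: $d,M\in\mathbb{N}$, $t_0<T$; $W_1,\dots,W_M$ independent scalar Wiener processes, $W_0(t)=t$, $W(t)=(W_m(t))_{m=0}^M$; $g_m:[t_0,T]\times\mathbb{R}^d\to\mathbb{R}^d$ such that the SDE has a unique solution. Integrals $\star\,\mathrm{d}W_m$ are all Itô ($\gamma^\star=\tfrac12$) or all Stratonovich ($\gamma^\star=0$). Equidistant grid $h=(T-t_0)/N$, $t_n=t_0+nh$. Let $\Lambda=A_0-\gamma^\star\sum_{m=1}^MA_m^2$, $\tilde g_0=g_0-2\gamma^\star\sum_{m=1}^MA_mg_m$, $\tilde g_m=g_m$ ($m\ge1$), $L^0(t)=\Lambda(t-t_0)+\sum_{m=1}^MA_m(W_m(t)-W_m(t_0))$, $V^0(t)=e^{-L^0(t)}X(t)$. The globally transformed SDE is $\mathrm{d}V^0=\sum_{m=0}^M\hat g^0_m(W(t),V^0)\star\mathrm{d}W_m$, $V^0(t_0)=x_0$, with $\hat g^0_m(w,x)=e^{-\ell(w)}\tilde g_m(w_0,e^{\ell(w)}x)$, $\ell(w)=\Lambda(w_0-t_0)+\sum_{m\ge1}A_m(w_m-W_m(t_0))$; its autonomous form is the SDE for $(W^\top,(V^0)^\top)^\top$ with coefficients $(\delta_{0m},\dots,\delta_{Mm},(\hat g^0_m)^\top)^\top$. Also $\bar L^0_n=\Lambda(t_n-t_0)+\sum_{m=1}^MA_m(W^n_m-W^0_m)$, with $W^0=W(t_0)$. $C^k_P(\mathbb{R}^q,\mathbb{R})$ is the set of $u\in C^k(\mathbb{R}^q,\mathbb{R})$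 such that $u$ and all its partial derivatives of order $\le k$ are polynomially bounded ($|u(x)|\le K(1+\|x\|_2^\kappa)$ for some $K,\kappa\ge0$). *)

theory Defs
  imports "HOL-Analysis.Analysis" "HOL-Probability.Probability"
begin

definition mat_pow :: "real^'n^'n \<Rightarrow> nat \<Rightarrow> real^'n^'n" where
  "mat_pow A k = (((**) A) ^^ k) (mat 1)"

definition mexp :: "real^'n^'n \<Rightarrow> real^'n^'n" where
  "mexp A = (\<Sum>k. (1 / fact k) *\<^sub>R mat_pow A k)"

definition poly_bounded :: "('a::real_normed_vector \<Rightarrow> real) \<Rightarrow> bool" where
  "poly_bounded u \<longleftrightarrow> (\<exists>K \<kappa>. K \<ge> 0 \<and> \<kappa> \<ge> 0 \<and> (\<forall>x. \<bar>u x\<bar> \<le> K * (1 + norm x powr \<kappa>)))"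

fun CkP :: "nat \<Rightarrow> ('a::euclidean_space \<Rightarrow> real) set" where
  "CkP 0 = {u. continuous_on UNIV u \<and> poly_bounded u}"
| "CkP (Suc k) = {u. continuous_on UNIV u \<and> poly_bounded u \<and> (\<forall>x. u differentiable (at x)) \<and>
      (\<forall>i\<in>Basis. (\<lambda>x. frechet_derivative u (at x) i) \<in> CkP k)}"

definition indep_wiener ::
  "'w measure \<Rightarrow> real \<Rightarrow> real \<Rightarrow> ('m::finite \<Rightarrow> real) \<Rightarrow> ('m \<Rightarrow> real \<Rightarrow> 'w \<Rightarrow> real) \<Rightarrow> bool" where
  "indep_wiener P t0 T w0 W \<longleftrightarrow>
     (\<forall>m. \<forall>t\<in>{t0..T}. W m t \<in> borel_measurable P) \<and>
     (\<forall>m. \<forall>\<omega>\<in>space P. W m t0 \<omega> = w0 m) \<and>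
     (\<forall>m. \<forall>\<omega>\<in>space P. continuous_on {t0..T} (\<lambda>t. W m t \<omega>)) \<and>
     (\<forall>(s::nat \<Rightarrow> real) k. t0 \<le> s 0 \<and> s k \<le> T \<and> (\<forall>j<k. s j < s (Suc j)) \<longrightarrow>
        prob_space.indep_vars P (\<lambda>_. borel)
          (\<lambda>(m, j) \<omega>. W m (s (Suc j)) \<omega> - W m (s j) \<omega>) (UNIV \<times> {..<k}) \<and>
        (\<forall>m. \<forall>j<k. distributed P lborel (\<lambda>\<omega>. W m (s (Suc j)) \<omega> - W m (s j) \<omega>)
                      (\<lambda>x. ennreal (normal_density 0 (sqrt (s (Suc j) - s j)) x))))"

end

theory Submission
  imports Defs "HOL-Analysis.Analysis"
begin

typedef (overloaded) ('a::euclidean_space) endo = "UNIV :: ('a \<Rightarrow>\<^sub>L 'a) set" by simp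
setup_lifting type_definition_endo

instantiation endo :: (euclidean_space) real_vector
begin
lift_definition zero_endo :: "'a endo" is 0 .
lift_definition plus_endo :: "'a endo \<Rightarrow> 'a endo \<Rightarrow> 'a endo" is "(+)" .
lift_definition minus_endo :: "'a endo \<Rightarrow> 'a endo \<Rightarrow> 'a endo" is "(-)" .
lift_definition uminus_endo :: "'a endo \<Rightarrow> 'a endo" is uminus .
lift_definition scaleR_endo :: "real \<Rightarrow> 'a endo \<Rightarrow> 'a endo" is scaleR .
instance by standard (transfer, simp add: algebra_simps)+
end

instantiation endo :: (euclidean_space) real_normed_vector
begin
lift_definition norm_endo :: "'a endo \<Rightarrow> real" is norm .
definition sgn_endo :: "'a endo \<Rightarrow> 'a endo" where "sgn_endo x = x /\<^sub>R norm x"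
definition dist_endo :: "'a endo \<Rightarrow> 'a endo \<Rightarrow> real" where "dist_endo x y = norm (x - y)"
definition uniformity_endo :: "('a endo \<times> 'a endo) filter" where
  "uniformity_endo = (INF e\<in>{0<..}. principal {(x, y). dist x y < e})"
definition open_endo :: "'a endo set \<Rightarrow> bool" where
  "open_endo U = (\<forall>x\<in>U. \<forall>\<^sub>F (x', y) in uniformity. x' = x \<longrightarrow> y \<in> U)"
instance
  apply standard
  unfolding sgn_endo_def dist_endo_def uniformity_endo_def open_endo_def
  apply (simp_all add: algebra_simps)
  subgoal by transfer simp
  subgoal by transfer (simp add: norm_triangle_ineq)
  subgoal by transfer simp
  done
end

lemma norm_Rep_endo: "norm (Rep_endo x) = norm x" by transfer simp
lemma dist_Rep_endo: "dist (Rep_endo x) (Rep_endo y) = dist x y"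
  by (simp add: dist_norm dist_endo_def) (transfer, simp)

instance endo :: (euclidean_space) banach
proof
  fix X :: "nat \<Rightarrow> 'a endo" assume "Cauchy X"
  then have "Cauchy (\<lambda>n. Rep_endo (X n))" unfolding Cauchy_def by (simp add: dist_Rep_endo)
  then obtain L where L: "(\<lambda>n. Rep_endo (X n)) \<longlonglongrightarrow> L" using convergent_def Cauchy_convergent_iff by blast
  have "X \<longlonglongrightarrow> Abs_endo L"
    unfolding tendsto_iff
  proof (intro allI impI)
    fix e :: real assume "0 < e"
    with L have "\<forall>\<^sub>F n in sequentially. dist (Rep_endo (X n)) L < e" by (simp add: tendsto_iff)
    then show "\<forall>\<^sub>F n in sequentially. dist (X n) (Abs_endo L) < e"
      by (simp add: dist_Rep_endo[symmetric] Abs_endo_inverse)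
  qed
  then show "convergent X" by (auto simp: convergent_def)
qed

instantiation endo :: (euclidean_space) real_normed_algebra_1
begin
lift_definition one_endo :: "'a endo" is id_blinfun .
lift_definition times_endo :: "'a endo \<Rightarrow> 'a endo \<Rightarrow> 'a endo" is "(o\<^sub>L)" .
instance
  apply standard
  subgoal by transfer (rule blinfun_eqI, simp)
  subgoal by transfer (rule blinfun_eqI, simp add: blinfun.add_left)
  subgoal by transfer (rule blinfun_eqI, simp add: blinfun.add_right blinfun.add_left)
  subgoal by transfer (rule blinfun_eqI, simp add: blinfun.scaleR_left)
  subgoal by transfer (rule blinfun_eqI, simp add: blinfun.scaleR_right blinfun.scaleR_left)
  subgoal by transfer (rule blinfun_eqI, simp)
  subgoal by transfer (rule blinfun_eqI, simp)
  subgoal by transfer (metis norm_blinfun_id norm_zero zero_neq_one)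
  subgoal by transfer (rule norm_blinfun_compose)
  subgoal by transfer simp
  done
end

lemma Rep_endo_add: "Rep_endo (x + y) = Rep_endo x + Rep_endo y" by transfer simp
lemma Rep_endo_scaleR: "Rep_endo (c *\<^sub>R x) = c *\<^sub>R Rep_endo x" by transfer simp
lemma Rep_endo_mult: "blinfun_apply (Rep_endo (x * y)) v = blinfun_apply (Rep_endo x) (blinfun_apply (Rep_endo y) v)"
  by transfer simp
lemma Rep_endo_one: "blinfun_apply (Rep_endo 1) v = v" by transfer simp

lemma bounded_linear_Rep_endo: "bounded_linear Rep_endo"
  by (rule bounded_linear_intro[where K=1]) (auto simp: Rep_endo_add Rep_endo_scaleR norm_Rep_endo)

lemma bounded_linear_endo_apply: "bounded_linear (\<lambda>e. blinfun_apply (Rep_endo e) v)"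
  by (rule bounded_linear_compose[OF blinfun.bounded_linear_left bounded_linear_Rep_endo, unfolded o_def])

lemma bounded_linear_ent: "bounded_linear (\<lambda>e. blinfun_apply (Rep_endo e) v $ i)"
  by (rule bounded_linear_compose[OF bounded_linear_vec_nth bounded_linear_endo_apply, unfolded o_def])

definition tau :: "real^'n^'n \<Rightarrow> (real^'n) endo" where
  "tau A = Abs_endo (Blinfun (\<lambda>x. A *v x))"

lemma tau_apply[simp]: "blinfun_apply (Rep_endo (tau A)) x = A *v x"
  by (simp add: tau_def Abs_endo_inverse bounded_linear_Blinfun_apply)

lemma endo_eqI: "(\<And>x. blinfun_apply (Rep_endo a) x = blinfun_apply (Rep_endo b) x) \<Longrightarrow> a = b"
  by (metis Rep_endo_inject blinfun_eqI)

lemma tau_add: "tau (A + B) = tau A + tau B"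
  by (rule endo_eqI) (simp add: Rep_endo_add matrix_vector_mult_add_rdistrib blinfun.add_left)
lemma tau_scaleR: "tau (c *\<^sub>R A) = c *\<^sub>R tau A"
  by (rule endo_eqI) (simp add: Rep_endo_scaleR scaleR_matrix_vector_assoc blinfun.scaleR_left)
lemma tau_mult: "tau (A ** B) = tau A * tau B"
  by (rule endo_eqI) (simp add: Rep_endo_mult matrix_vector_mul_assoc)
lemma tau_one: "tau (mat 1) = 1"
  by (rule endo_eqI) (simp add: Rep_endo_one)
lemma tau_zero: "tau 0 = 0"
  by (rule endo_eqI) (simp add: zero_endo.rep_eq)
lemma tau_minus: "tau (- A) = - tau A"
  by (metis add_eq_0_iff tau_add tau_zero add.right_inverse)
lemma tau_diff: "tau (A - B) = tau A - tau B"
  by (metis diff_conv_add_uminus tau_add tau_minus)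
lemma tau_sum: "tau (sum f S) = sum (\<lambda>i. tau (f i)) S"
  by (induct S rule: infinite_finite_induct) (auto simp: tau_zero tau_add)
lemma tau_inj: "tau A = tau B \<Longrightarrow> A = B"
  by (metis matrix_eq tau_apply)

definition sig :: "(real^'n) endo \<Rightarrow> real^'n^'n" where
  "sig e = (\<chi> i j. blinfun_apply (Rep_endo e) (axis j 1) $ i)"

lemma sig_matrix: "sig e = matrix (blinfun_apply (Rep_endo e))"
  by (simp add: sig_def matrix_def)

lemma sig_tau: "sig (tau A) = A"
proof -
  have "blinfun_apply (Rep_endo (tau A)) = (\<lambda>x. A *v x)" by (rule ext) simp
  then show ?thesis by (simp add: sig_matrix)
qed

lemma bounded_linear_sig: "bounded_linear sig"
proof (rule bounded_linear_intro[where K="real CARD('n) * real CARD('n)"])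
  fix x y :: "(real^'n) endo" and c :: real
  show "sig (x + y) = sig x + sig y"
    by (simp add: sig_def vec_eq_iff Rep_endo_add blinfun.add_left)
  show "sig (c *\<^sub>R x) = c *\<^sub>R sig x"
    by (simp add: sig_def vec_eq_iff Rep_endo_scaleR blinfun.scaleR_left)
  have e: "\<bar>blinfun_apply (Rep_endo x) (axis j 1) $ i\<bar> \<le> norm x" for i j :: 'n
  proof -
    have "\<bar>blinfun_apply (Rep_endo x) (axis j 1) $ i\<bar> \<le> norm (blinfun_apply (Rep_endo x) (axis j 1))"
      by (rule component_le_norm_cart)
    also have "\<dots> \<le> norm (Rep_endo x) * norm (axis j 1 :: real^'n)" by (rule norm_blinfun)
    finally show ?thesis by (simp add: norm_Rep_endo norm_axis_1)
  qed
  have "norm (sig x) \<le> (\<Sum>i\<in>UNIV. norm (sig x $ i))" unfolding norm_vec_def[of "sig x"]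
    by (rule L2_set_le_sum) simp
  also have "\<dots> \<le> (\<Sum>i\<in>(UNIV::'n set). \<Sum>j\<in>(UNIV::'n set). \<bar>sig x $ i $ j\<bar>)"
    by (intro sum_mono norm_le_l1_cart)
  also have "\<dots> \<le> (\<Sum>i\<in>(UNIV::'n set). \<Sum>j\<in>(UNIV::'n set). norm x)"
    by (intro sum_mono) (simp add: sig_def e)
  finally show "norm (sig x) \<le> norm x * (real CARD('n) * real CARD('n))" by (simp add: algebra_simps)
qed

lemma tau_mat_pow: "tau (mat_pow A k) = tau A ^ k"
  by (induct k) (simp_all add: mat_pow_def tau_one tau_mult)

lemma sig_exp_tau: "sig (exp (tau A)) = mexp A" and summable_mexp: "summable (\<lambda>k. (1 / fact k) *\<^sub>R mat_pow A k)"
proof -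
  have eq: "(\<lambda>n. tau A ^ n /\<^sub>R fact n) = (\<lambda>k. tau ((1 / fact k) *\<^sub>R mat_pow A k))"
    by (simp add: tau_scaleR tau_mat_pow divide_inverse_commute)
  have s: "summable (\<lambda>k. tau ((1 / fact k) *\<^sub>R mat_pow A k))"
    using summable_exp_generic[of "tau A"] by (simp add: eq)
  from bounded_linear.summable[OF bounded_linear_sig s]
  show "summable (\<lambda>k. (1 / fact k) *\<^sub>R mat_pow A k)" by (simp add: sig_tau)
  have "sig (exp (tau A)) = sig (\<Sum>k. tau ((1 / fact k) *\<^sub>R mat_pow A k))"
    by (simp add: exp_def eq)
  also have "\<dots> = (\<Sum>k. sig (tau ((1 / fact k) *\<^sub>R mat_pow A k)))"
    by (rule bounded_linear.suminf[OF bounded_linear_sig s])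
  finally show "sig (exp (tau A)) = mexp A" by (simp add: sig_tau mexp_def)
qed

lemma tau_sig: fixes e :: "(real^'n) endo" shows "tau (sig e) = e"
proof (rule endo_eqI)
  fix x :: "real^'n"
  have "sig e = matrix (blinfun_apply (Rep_endo e))" by (rule sig_matrix)
  then show "blinfun_apply (Rep_endo (tau (sig e))) x = blinfun_apply (Rep_endo e) x"
    using matrix_vector_mul(3)[OF blinfun.bounded_linear_right, of "Rep_endo e"] by (simp add: fun_eq_iff)
qed

lemma mexp_tau: "tau (mexp A) = exp (tau A)"
  by (metis sig_exp_tau tau_sig)

lemma mexp_apply: "mexp A *v x = blinfun_apply (Rep_endo (exp (tau A))) x"
  by (metis mexp_tau tau_apply)

definition pb :: "('a::real_normed_vector \<Rightarrow> real) \<Rightarrow> bool" where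
  "pb u \<longleftrightarrow> (\<exists>C n. \<forall>x. \<bar>u x\<bar> \<le> C * (1 + norm x) ^ n)"

lemma powr_le_pow_aux:
  fixes r k :: real assumes "r \<ge> 0" "k \<ge> 0"
  shows "1 + r powr k \<le> 2 * (1 + r) ^ nat \<lceil>k\<rceil>"
proof -
  have "r powr k \<le> (1 + r) powr k" using assms by (intro powr_mono2) auto
  also have "\<dots> \<le> (1 + r) powr (real (nat \<lceil>k\<rceil>))" using assms by (intro powr_mono) auto
  also have "\<dots> = (1 + r) ^ nat \<lceil>k\<rceil>" by (rule powr_realpow) (use assms in auto)
  finally have a: "r powr k \<le> (1 + r) ^ nat \<lceil>k\<rceil>" .
  have b: "1 \<le> (1 + r) ^ nat \<lceil>k\<rceil>" using assms by simp
  show ?thesis using a b by simp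
qed

lemma pow_le_powr_aux:
  fixes r :: real assumes "r \<ge> 0"
  shows "(1 + r) ^ n \<le> 2 ^ n * (1 + r powr real n)"
proof (cases "r \<le> 1")
  case True
  have "(1 + r) ^ n \<le> 2 ^ n" using assms True by (intro power_mono) auto
  moreover have "(2::real) ^ n * 1 \<le> 2 ^ n * (1 + r powr real n)" by (intro mult_left_mono) auto
  ultimately show ?thesis by (metis mult.right_neutral order_trans)
next
  case False
  have "(1 + r) ^ n \<le> (2 * r) ^ n" using assms False by (intro power_mono) auto
  also have "\<dots> = 2 ^ n * r powr real n" using False by (simp add: powr_realpow power_mult_distrib)
  also have "\<dots> \<le> 2 ^ n * (1 + r powr real n)" by simp
  finally show ?thesis .
qed

lemma poly_bounded_pb: "poly_bounded u \<longleftrightarrow> pb u"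
proof
  assume "poly_bounded u"
  then obtain K k where K: "K \<ge> 0" "k \<ge> 0" "\<And>x. \<bar>u x\<bar> \<le> K * (1 + norm x powr k)"
    unfolding poly_bounded_def by blast
  have "\<bar>u x\<bar> \<le> (2 * K) * (1 + norm x) ^ nat \<lceil>k\<rceil>" for x
    using K(3)[of x] mult_left_mono[OF powr_le_pow_aux[of "norm x" k] K(1)] K(2) by simp
  then show "pb u" unfolding pb_def by blast
next
  assume "pb u"
  then obtain C n where C: "\<And>x. \<bar>u x\<bar> \<le> C * (1 + norm x) ^ n" unfolding pb_def by blast
  have C0: "C \<ge> 0" using C[of 0] by simp
  have "\<bar>u x\<bar> \<le> (C * 2 ^ n) * (1 + norm x powr real n)" for x
    using C[of x] mult_left_mono[OF pow_le_powr_aux[of "norm x" n] C0] by (simp add: mult.assoc)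
  then show "poly_bounded u" unfolding poly_bounded_def
    by (intro exI[of _ "C * 2 ^ n"] exI[of _ "real n"]) (simp add: C0)
qed

lemma pbE: assumes "pb u" obtains C n where "C \<ge> 0" "\<And>x. \<bar>u x\<bar> \<le> C * (1 + norm x) ^ n"
proof -
  obtain C n where C: "\<And>x. \<bar>u x\<bar> \<le> C * (1 + norm x) ^ n" using assms unfolding pb_def by blast
  have "C \<ge> 0" using C[of 0] by simp
  then show ?thesis using C that by blast
qed

lemma pb_mono_exp:
  fixes r :: real assumes "r \<ge> 0" "n \<le> m" shows "(1 + r) ^ n \<le> (1 + r) ^ m"
  using assms by (intro power_increasing) auto

lemma pb_add: assumes "pb u" "pb v" shows "pb (\<lambda>x. u x + v x)"
proof -
  obtain C n where C: "C \<ge> 0" "\<And>x. \<bar>u x\<bar> \<le> C * (1 + norm x) ^ n" by (rule pbE[OF assms(1)]) auto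
  obtain D m where D: "D \<ge> 0" "\<And>x. \<bar>v x\<bar> \<le> D * (1 + norm x) ^ m" by (rule pbE[OF assms(2)]) auto
  have "\<bar>u x + v x\<bar> \<le> (C + D) * (1 + norm x) ^ max n m" for x
  proof -
    have "\<bar>u x\<bar> \<le> C * (1 + norm x) ^ max n m"
      using C(2)[of x] mult_left_mono[OF pb_mono_exp[of "norm x" n "max n m"] C(1)] by simp
    moreover have "\<bar>v x\<bar> \<le> D * (1 + norm x) ^ max n m"
      using D(2)[of x] mult_left_mono[OF pb_mono_exp[of "norm x" m "max n m"] D(1)] by simp
    ultimately show ?thesis by (simp add: algebra_simps)
  qed
  then show ?thesis unfolding pb_def by blast
qed

lemma pb_mult: assumes "pb u" "pb v" shows "pb (\<lambda>x. u x * v x)"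
proof -
  obtain C n where C: "C \<ge> 0" "\<And>x. \<bar>u x\<bar> \<le> C * (1 + norm x) ^ n" by (rule pbE[OF assms(1)]) auto
  obtain D m where D: "D \<ge> 0" "\<And>x. \<bar>v x\<bar> \<le> D * (1 + norm x) ^ m" by (rule pbE[OF assms(2)]) auto
  have "\<bar>u x * v x\<bar> \<le> (C * D) * (1 + norm x) ^ (n + m)" for x
  proof -
    have "\<bar>u x * v x\<bar> = \<bar>u x\<bar> * \<bar>v x\<bar>" by (simp add: abs_mult)
    also have "\<dots> \<le> (C * (1 + norm x) ^ n) * (D * (1 + norm x) ^ m)"
      by (intro mult_mono C D) (auto simp: C(1))
    finally show ?thesis by (simp add: power_add algebra_simps)
  qed
  then show ?thesis unfolding pb_def by blast
qed

lemma pb_const: "pb (\<lambda>x. c)"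
  unfolding pb_def by (intro exI[of _ "\<bar>c\<bar>"] exI[of _ 0]) simp

lemma pb_sum: "finite S \<Longrightarrow> (\<And>i. i \<in> S \<Longrightarrow> pb (f i)) \<Longrightarrow> pb (\<lambda>x. \<Sum>i\<in>S. f i x)"
  by (induct S rule: finite_induct) (auto intro: pb_add pb_const)

lemma pb_abs: "pb u \<Longrightarrow> pb (\<lambda>x. \<bar>u x\<bar>)" unfolding pb_def by simp

lemma pb_le: assumes "pb v" "\<And>x. \<bar>u x\<bar> \<le> v x" shows "pb u"
proof -
  obtain C n where C: "C \<ge> 0" "\<And>x. \<bar>v x\<bar> \<le> C * (1 + norm x) ^ n" by (rule pbE[OF assms(1)]) auto
  have "\<bar>u x\<bar> \<le> C * (1 + norm x) ^ n" for x
    using assms(2)[of x] C(2)[of x] by linarith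
  then show ?thesis unfolding pb_def by blast
qed

lemma pb_linear: "bounded_linear l \<Longrightarrow> pb l"
proof -
  assume "bounded_linear l"
  then obtain K where K: "\<And>x. norm (l x) \<le> norm x * K" "K > 0" using bounded_linear.pos_bounded by blast
  have "\<bar>l x\<bar> \<le> K * (1 + norm x) ^ 1" for x
  proof -
    have "\<bar>l x\<bar> \<le> K * norm x" using K(1)[of x] by (simp add: mult.commute)
    then show ?thesis using K(2) by (simp add: algebra_simps)
  qed
  then show "pb l" unfolding pb_def by blast
qed

lemma pb_compose:
  fixes \<Phi> :: "'a::real_normed_vector \<Rightarrow> 'b::real_normed_vector"
  assumes "pb u" "pb (\<lambda>z. norm (\<Phi> z))"
  shows "pb (\<lambda>z. u (\<Phi> z))"
proof -
  obtain C n where C: "C \<ge> 0" "\<And>x. \<bar>u x\<bar> \<le> C * (1 + norm x) ^ n" by (rule pbE[OF assms(1)]) auto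
  obtain D m where D: "D \<ge> 0" "\<And>x. \<bar>norm (\<Phi> x)\<bar> \<le> D * (1 + norm x) ^ m" by (rule pbE[OF assms(2)]) auto
  have "\<bar>u (\<Phi> z)\<bar> \<le> (C * (1 + D) ^ n) * (1 + norm z) ^ (m * n)" for z
  proof -
    have "1 + norm (\<Phi> z) \<le> (1 + D) * (1 + norm z) ^ m"
    proof -
      have a: "1 \<le> (1 + norm z) ^ m" by simp
      have b: "norm (\<Phi> z) \<le> D * (1 + norm z) ^ m" using D(2)[of z] by simp
      have c: "(1 + D) * (1 + norm z) ^ m = (1 + norm z) ^ m + D * (1 + norm z) ^ m" by (simp add: distrib_right)
      show ?thesis using a b c by linarith
    qed
    then have "(1 + norm (\<Phi> z)) ^ n \<le> ((1 + D) * (1 + norm z) ^ m) ^ n"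
      by (intro power_mono) auto
    also have "\<dots> = (1 + D) ^ n * (1 + norm z) ^ (m * n)" by (simp add: power_mult_distrib power_mult)
    finally have "(1 + norm (\<Phi> z)) ^ n \<le> (1 + D) ^ n * (1 + norm z) ^ (m * n)" .
    with C(2)[of "\<Phi> z"] mult_left_mono[OF this C(1)] show ?thesis by (simp add: mult.assoc)
  qed
  then show ?thesis unfolding pb_def by blast
qed

lemma pb_norm_euclidean:
  fixes \<Phi> :: "'a::real_normed_vector \<Rightarrow> 'b::euclidean_space"
  assumes "\<And>b. b \<in> Basis \<Longrightarrow> pb (\<lambda>z. \<Phi> z \<bullet> b)"
  shows "pb (\<lambda>z. norm (\<Phi> z))"
proof -
  have "pb (\<lambda>z. \<Sum>b\<in>Basis. \<bar>\<Phi> z \<bullet> b\<bar>)" by (intro pb_sum pb_abs assms) auto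
  then show ?thesis by (rule pb_le) (simp add: norm_le_l1)
qed

lemma CkP_0D: assumes "u \<in> CkP k" shows "continuous_on UNIV u \<and> pb u"
proof (cases k)
  case 0 then show ?thesis using assms by (simp add: poly_bounded_pb)
next
  case (Suc n)
  then have "u \<in> CkP (Suc n)" using assms by simp
  then have "continuous_on UNIV u" "poly_bounded u" unfolding CkP.simps(2)[of n] mem_Collect_eq by blast+
  then show ?thesis by (simp add: poly_bounded_pb)
qed

lemma CkP_SucD:
  assumes "u \<in> CkP (Suc k)"
  shows "(u has_derivative frechet_derivative u (at x)) (at x)"
    and "\<And>i. i \<in> Basis \<Longrightarrow> (\<lambda>x. frechet_derivative u (at x) i) \<in> CkP k"
proof -
  have h: "\<forall>x. u differentiable (at x)" "\<forall>i\<in>Basis. (\<lambda>x. frechet_derivative u (at x) i) \<in> CkP k"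
    using assms unfolding CkP.simps(2)[of k] mem_Collect_eq by blast+
  show "(u has_derivative frechet_derivative u (at x)) (at x)" using h(1) frechet_derivative_works by blast
  show "\<And>i. i \<in> Basis \<Longrightarrow> (\<lambda>x. frechet_derivative u (at x) i) \<in> CkP k" using h(2) by blast
qed

lemma CkP_SucI:
  assumes "pb u" "\<And>x. (u has_derivative D x) (at x)" "\<And>i. i \<in> Basis \<Longrightarrow> (\<lambda>x. D x i) \<in> CkP k"
  shows "u \<in> CkP (Suc k)"
proof -
  have fd: "frechet_derivative u (at x) = D x" for x using frechet_derivative_at[OF assms(2)] by simp
  have "continuous_on UNIV u"
    using assms(2) by (meson differentiable_def differentiable_imp_continuous_on differentiable_on_def)
  moreover have "poly_bounded u" using assms(1) by (simp add: poly_bounded_pb)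
  moreover have "\<forall>x. u differentiable (at x)" using assms(2) by (auto simp: differentiable_def)
  moreover have "\<forall>i\<in>Basis. (\<lambda>x. frechet_derivative u (at x) i) \<in> CkP k" using assms(3) by (simp add: fd)
  ultimately show ?thesis unfolding CkP.simps(2)[of k] mem_Collect_eq by blast
qed

lemma CkP_mono_Suc: "u \<in> CkP (Suc k) \<Longrightarrow> u \<in> CkP k"
proof (induct k arbitrary: u)
  case 0 then show ?case by auto
next
  case (Suc k)
  have h: "continuous_on UNIV u" "poly_bounded u" "\<forall>x. u differentiable (at x)"
     "\<forall>i\<in>Basis. (\<lambda>x. frechet_derivative u (at x) i) \<in> CkP (Suc k)"
    using Suc.prems unfolding CkP.simps(2)[of "Suc k"] mem_Collect_eq by blast+
  have "\<forall>i\<in>Basis. (\<lambda>x. frechet_derivative u (at x) i) \<in> CkP k" using h(4) Suc.hyps by blast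
  then show ?case using h(1-3) unfolding CkP.simps(2)[of k] mem_Collect_eq by blast
qed

lemma CkP_mono_add: "u \<in> CkP (k + j) \<Longrightarrow> u \<in> CkP k"
proof (induct j arbitrary: u)
  case 0 then show ?case by simp
next
  case (Suc j)
  have "u \<in> CkP (Suc (k + j))" using Suc.prems by (simp only: add_Suc_right)
  then show ?case using Suc.hyps CkP_mono_Suc by blast
qed

lemma CkP_mono: "k \<le> K \<Longrightarrow> u \<in> CkP K \<Longrightarrow> u \<in> CkP k"
proof -
  assume a: "k \<le> K" "u \<in> CkP K"
  have "k + (K - k) = K" using a(1) by simp
  then show ?thesis using CkP_mono_add[of u k "K - k"] a(2) by (simp only:)
qed

lemma CkP_const: "(\<lambda>x. c) \<in> CkP k"
proof (induct k arbitrary: c)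
  case 0 then show ?case by (simp add: poly_bounded_pb pb_const)
next
  case (Suc k)
  show ?case by (rule CkP_SucI[where D="\<lambda>x h. 0"]) (auto simp: pb_const Suc)
qed

lemma CkP_add: "u \<in> CkP k \<Longrightarrow> v \<in> CkP k \<Longrightarrow> (\<lambda>x. u x + v x) \<in> CkP k"
proof (induct k arbitrary: u v)
  case 0 then show ?case by (auto simp: poly_bounded_pb intro: pb_add continuous_on_add)
next
  case (Suc k)
  have pu: "pb u" "pb v" using CkP_0D[OF Suc.prems(1)] CkP_0D[OF Suc.prems(2)] by blast+
  show ?case
  proof (rule CkP_SucI[where D="\<lambda>x h. frechet_derivative u (at x) h + frechet_derivative v (at x) h"])
    show "pb (\<lambda>x. u x + v x)" using pu by (rule pb_add)
    show "((\<lambda>x. u x + v x) has_derivative (\<lambda>h. frechet_derivative u (at x) h + frechet_derivative v (at x) h)) (at x)" for x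
      by (intro has_derivative_add CkP_SucD(1)[OF Suc.prems(1)] CkP_SucD(1)[OF Suc.prems(2)])
    show "(\<lambda>x. frechet_derivative u (at x) i + frechet_derivative v (at x) i) \<in> CkP k" if "i \<in> Basis" for i
      by (intro Suc.hyps CkP_SucD(2)[OF Suc.prems(1) that] CkP_SucD(2)[OF Suc.prems(2) that])
  qed
qed

lemma CkP_mult: "u \<in> CkP k \<Longrightarrow> v \<in> CkP k \<Longrightarrow> (\<lambda>x. u x * v x) \<in> CkP k"
proof (induct k arbitrary: u v)
  case 0 then show ?case by (auto simp: poly_bounded_pb intro: pb_mult continuous_on_mult)
next
  case (Suc k)
  have pu: "pb u" "pb v" using CkP_0D[OF Suc.prems(1)] CkP_0D[OF Suc.prems(2)] by blast+
  have uk: "u \<in> CkP k" "v \<in> CkP k" using CkP_mono_Suc[OF Suc.prems(1)] CkP_mono_Suc[OF Suc.prems(2)] by blast+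
  show ?case
  proof (rule CkP_SucI[where D="\<lambda>x h. u x * frechet_derivative v (at x) h + frechet_derivative u (at x) h * v x"])
    show "pb (\<lambda>x. u x * v x)" using pu by (rule pb_mult)
    show "((\<lambda>x. u x * v x) has_derivative (\<lambda>h. u x * frechet_derivative v (at x) h + frechet_derivative u (at x) h * v x)) (at x)" for x
      by (intro has_derivative_mult CkP_SucD(1)[OF Suc.prems(1)] CkP_SucD(1)[OF Suc.prems(2)])
    show "(\<lambda>x. u x * frechet_derivative v (at x) i + frechet_derivative u (at x) i * v x) \<in> CkP k" if "i \<in> Basis" for i
      by (intro CkP_add Suc.hyps CkP_SucD(2)[OF Suc.prems(1) that] CkP_SucD(2)[OF Suc.prems(2) that] uk)
  qed
qed

lemma CkP_cmult: "u \<in> CkP k \<Longrightarrow> (\<lambda>x. c * u x) \<in> CkP k"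
  by (intro CkP_mult CkP_const)

lemma CkP_sum: "finite S \<Longrightarrow> (\<And>i. i \<in> S \<Longrightarrow> f i \<in> CkP k) \<Longrightarrow> (\<lambda>x. \<Sum>i\<in>S. f i x) \<in> CkP k"
  by (induct S rule: finite_induct) (auto intro: CkP_add CkP_const)

lemma CkP_linear: "bounded_linear l \<Longrightarrow> l \<in> CkP k"
proof (induct k)
  case 0 then show ?case by (auto simp: poly_bounded_pb intro: pb_linear linear_continuous_on)
next
  case (Suc k)
  show ?case
  proof (rule CkP_SucI[where D="\<lambda>x. l"])
    show "pb l" using Suc.prems by (rule pb_linear)
    show "(l has_derivative l) (at x)" for x using Suc.prems by (rule bounded_linear_imp_has_derivative)
    show "(\<lambda>x. l i) \<in> CkP k" for i by (rule CkP_const)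
  qed
qed

lemma CkP_compose0:
  fixes \<Phi> :: "'a::euclidean_space \<Rightarrow> 'b::euclidean_space"
  assumes "\<And>b. b \<in> Basis \<Longrightarrow> (\<lambda>z. \<Phi> z \<bullet> b) \<in> CkP k" "u \<in> CkP k"
  shows "continuous_on UNIV (\<lambda>z. u (\<Phi> z)) \<and> pb (\<lambda>z. u (\<Phi> z))"
proof -
  have c: "continuous_on UNIV (\<lambda>z. \<Phi> z \<bullet> b) \<and> pb (\<lambda>z. \<Phi> z \<bullet> b)" if "b \<in> Basis" for b
    using CkP_0D[OF assms(1)[OF that]] .
  have "continuous_on UNIV (\<lambda>z. \<Sum>b\<in>Basis. (\<Phi> z \<bullet> b) *\<^sub>R b)"
    using c by (intro continuous_on_sum continuous_on_scaleR continuous_on_const) auto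
  then have cP: "continuous_on UNIV \<Phi>" by (simp add: euclidean_representation)
  have u: "continuous_on UNIV u" "pb u" using CkP_0D[OF assms(2)] by auto
  have "continuous_on UNIV (\<lambda>z. u (\<Phi> z))"
    by (rule continuous_on_compose2[OF u(1) cP]) simp
  moreover have "pb (\<lambda>z. u (\<Phi> z))"
    by (rule pb_compose[OF u(2) pb_norm_euclidean]) (use c in blast)
  ultimately show ?thesis by blast
qed

lemma CkP_compose:
  fixes \<Phi> :: "'a::euclidean_space \<Rightarrow> 'b::euclidean_space"
  assumes "\<And>b. b \<in> Basis \<Longrightarrow> (\<lambda>z. \<Phi> z \<bullet> b) \<in> CkP k" "u \<in> CkP k"
  shows "(\<lambda>z. u (\<Phi> z)) \<in> CkP k"
  using assms
proof (induct k arbitrary: u)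
  case 0 then show ?case using CkP_compose0[of \<Phi> 0 u] by (simp add: poly_bounded_pb)
next
  case (Suc k)
  define D\<Phi> where "D\<Phi> z = (\<lambda>h. \<Sum>b\<in>Basis. frechet_derivative (\<lambda>z. \<Phi> z \<bullet> b) (at z) h *\<^sub>R b)" for z
  have dcomp: "\<And>b z. b \<in> Basis \<Longrightarrow> ((\<lambda>z. \<Phi> z \<bullet> b) has_derivative frechet_derivative (\<lambda>z. \<Phi> z \<bullet> b) (at z)) (at z)"
    using CkP_SucD(1)[OF Suc.prems(1)] by blast
  have hP: "(\<Phi> has_derivative D\<Phi> z) (at z)" for z
  proof -
    have "((\<lambda>z. \<Sum>b\<in>Basis. (\<Phi> z \<bullet> b) *\<^sub>R b) has_derivative D\<Phi> z) (at z)"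
      unfolding D\<Phi>_def
      by (intro has_derivative_sum has_derivative_scaleR_left dcomp)
    then show ?thesis by (simp add: euclidean_representation)
  qed
  have lin: "linear (frechet_derivative u (at y))" for y
    using has_derivative_bounded_linear[OF CkP_SucD(1)[OF Suc.prems(2)]] bounded_linear.linear by blast
  have hU: "((\<lambda>z. u (\<Phi> z)) has_derivative
      (\<lambda>h. \<Sum>b\<in>Basis. frechet_derivative (\<lambda>z. \<Phi> z \<bullet> b) (at z) h * frechet_derivative u (at (\<Phi> z)) b)) (at z)" for z
  proof -
    have "((\<lambda>z. u (\<Phi> z)) has_derivative (\<lambda>h. frechet_derivative u (at (\<Phi> z)) (D\<Phi> z h))) (at z)"
      by (rule has_derivative_compose[OF hP CkP_SucD(1)[OF Suc.prems(2)]])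
    moreover have "frechet_derivative u (at (\<Phi> z)) (D\<Phi> z h) =
        (\<Sum>b\<in>Basis. frechet_derivative (\<lambda>z. \<Phi> z \<bullet> b) (at z) h * frechet_derivative u (at (\<Phi> z)) b)" for h
      unfolding D\<Phi>_def by (simp add: linear_sum[OF lin] linear_scale[OF lin])
    ultimately show ?thesis by simp
  qed
  have comp_k: "\<And>b. b \<in> Basis \<Longrightarrow> (\<lambda>z. \<Phi> z \<bullet> b) \<in> CkP k" using Suc.prems(1) CkP_mono_Suc by blast
  show ?case
  proof (rule CkP_SucI[OF _ hU])
    show "pb (\<lambda>z. u (\<Phi> z))"
      using CkP_compose0[of \<Phi> "Suc k" u, OF Suc.prems(1) Suc.prems(2)] by blast
    show "(\<lambda>z. \<Sum>b\<in>Basis. frechet_derivative (\<lambda>z. \<Phi> z \<bullet> b) (at z) i * frechet_derivative u (at (\<Phi> z)) b) \<in> CkP k"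
      if "i \<in> Basis" for i
    proof (rule CkP_sum)
      fix b :: 'b assume b: "b \<in> Basis"
      have 1: "(\<lambda>z. frechet_derivative (\<lambda>z. \<Phi> z \<bullet> b) (at z) i) \<in> CkP k"
        by (rule CkP_SucD(2)[OF Suc.prems(1)[OF b] that])
      have 2: "(\<lambda>z. frechet_derivative u (at (\<Phi> z)) b) \<in> CkP k"
        by (rule Suc.hyps[OF comp_k CkP_SucD(2)[OF Suc.prems(2) b]])
      show "(\<lambda>z. frechet_derivative (\<lambda>z. \<Phi> z \<bullet> b) (at z) i * frechet_derivative u (at (\<Phi> z)) b) \<in> CkP k"
        by (rule CkP_mult[OF 1 2])
    qed simp
  qed
qed

lemma exp_commute:
  fixes x y :: "'a::{real_normed_algebra_1,banach}"
  assumes "x * y = y * x" shows "exp x * y = y * exp x"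
proof -
  have s: "summable (\<lambda>n. x ^ n /\<^sub>R fact n)" by (rule summable_exp_generic)
  have "exp x * y = (\<Sum>n. x ^ n /\<^sub>R fact n * y)" unfolding exp_def by (rule suminf_mult2[OF s])
  also have "\<dots> = (\<Sum>n. y * (x ^ n /\<^sub>R fact n))"
    using power_commuting_commutes[OF assms] by (simp add: mult_scaleR_left mult_scaleR_right)
  also have "\<dots> = y * exp x" unfolding exp_def by (rule suminf_mult[OF s])
  finally show ?thesis .
qed

lemma comm_sum:
  fixes x :: "'a::real_normed_algebra"
  assumes "\<And>m. m \<in> S \<Longrightarrow> x * A m = A m * x"
  shows "x * (\<Sum>m\<in>S. c m *\<^sub>R A m) = (\<Sum>m\<in>S. c m *\<^sub>R A m) * x"
  using assms by (simp add: sum_distrib_left sum_distrib_right mult_scaleR_left mult_scaleR_right)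

lemma exp_sum_deriv:
  fixes A :: "'m::finite \<Rightarrow> 'a::{real_normed_algebra_1,banach}" and w0 :: "'m \<Rightarrow> real"
  assumes comm: "\<And>i j. A i * A j = A j * A i" and fin: "finite S"
  shows "((\<lambda>w::real^'m. exp (\<Sum>m\<in>S. (w$m - w0 m) *\<^sub>R A m)) has_derivative
          (\<lambda>v. (\<Sum>m\<in>S. (v$m) *\<^sub>R A m) * exp (\<Sum>m\<in>S. (w$m - w0 m) *\<^sub>R A m))) (at w)"
  using fin
proof (induct S rule: finite_induct)
  case empty then show ?case by simp
next
  case (insert a S)
  define f where "f w = exp ((w$a - w0 a) *\<^sub>R A a)" for w :: "real^'m"
  define g where "g w = exp (\<Sum>m\<in>S. (w$m - w0 m) *\<^sub>R A m)" for w :: "real^'m"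
  have cA: "\<And>c d. (c *\<^sub>R A a) * (\<Sum>m\<in>S. d m *\<^sub>R A m) = (\<Sum>m\<in>S. d m *\<^sub>R A m) * (c *\<^sub>R A a)"
    by (rule comm_sum) (simp add: comm mult_scaleR_left mult_scaleR_right)
  have eq: "exp (\<Sum>m\<in>insert a S. (w$m - w0 m) *\<^sub>R A m) = f w * g w" for w
    using insert(2) by (simp add: f_def g_def) (rule exp_add_commuting[OF cA])
  have fd: "(f has_derivative (\<lambda>v. (v$a) *\<^sub>R (A a * f w))) (at w)"
  proof -
    have 1: "((\<lambda>w::real^'m. w$a - w0 a) has_derivative (\<lambda>v. v$a)) (at w)"
      using bounded_linear_imp_has_derivative[OF bounded_linear_vec_nth[of a]]
      by (auto intro!: derivative_eq_intros)
    have 2: "((\<lambda>t. exp (t *\<^sub>R A a)) has_derivative (\<lambda>h. h *\<^sub>R (A a * exp ((w$a - w0 a) *\<^sub>R A a)))) (at (w$a - w0 a))"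
      using exp_scaleR_has_vector_derivative_left[of "A a" "w$a - w0 a"] by (simp add: has_vector_derivative_def)
    show ?thesis using has_derivative_compose[OF 1 2] unfolding f_def[abs_def] by simp
  qed
  have gd: "(g has_derivative (\<lambda>v. (\<Sum>m\<in>S. (v$m) *\<^sub>R A m) * g w)) (at w)"
    using insert(3) unfolding g_def[abs_def] by simp
  have prod: "((\<lambda>w. f w * g w) has_derivative
      (\<lambda>v. f w * ((\<Sum>m\<in>S. (v$m) *\<^sub>R A m) * g w) + ((v$a) *\<^sub>R (A a * f w)) * g w)) (at w)"
    by (rule has_derivative_mult[OF fd gd])
  have fc: "f w * (\<Sum>m\<in>S. (v$m) *\<^sub>R A m) = (\<Sum>m\<in>S. (v$m) *\<^sub>R A m) * f w" for v
    unfolding f_def by (rule exp_commute) (rule cA)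
  have deq: "f w * ((\<Sum>m\<in>S. (v$m) *\<^sub>R A m) * g w) + ((v$a) *\<^sub>R (A a * f w)) * g w
      = (\<Sum>m\<in>insert a S. (v$m) *\<^sub>R A m) * (f w * g w)" for v
  proof -
    define X where "X = (\<Sum>m\<in>S. (v$m) *\<^sub>R A m)"
    have "f w * (X * g w) = (f w * X) * g w" by (simp only: mult.assoc)
    also have "\<dots> = (X * f w) * g w" by (simp only: fc X_def)
    also have "\<dots> = X * (f w * g w)" by (simp only: mult.assoc)
    finally have 1: "f w * (X * g w) = X * (f w * g w)" .
    have 2: "(\<Sum>m\<in>insert a S. (v$m) *\<^sub>R A m) = (v$a) *\<^sub>R A a + X"
      using insert(1,2) by (simp add: X_def)
    have 3: "((v$a) *\<^sub>R (A a * f w)) * g w = (v$a) *\<^sub>R A a * (f w * g w)"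
      by (simp add: mult_scaleR_left mult.assoc)
    show ?thesis unfolding 2 using 1 3 by (simp add: X_def distrib_right)
  qed
  show ?case using prod unfolding eq[symmetric] deq by simp
qed

lemma skew_inner_zero:
  fixes S :: "real^'n^'n" assumes "transpose S = - S"
  shows "inner v (S *v v) = 0"
proof -
  have "inner v (S *v v) = inner (v v* S) v" by (simp add: dot_lmul_matrix)
  also have "v v* S = transpose S *v v" by simp
  also have "\<dots> = - (S *v v)" using assms
    by (simp add: vec_eq_iff matrix_vector_mult_def sum_negf)
  finally have "inner v (S *v v) = - inner v (S *v v)" by (simp add: inner_commute)
  then show ?thesis by simp
qed

lemma exp_skew_isometry:
  fixes S :: "real^'n^'n" assumes skew: "transpose S = - S"
  shows "norm (blinfun_apply (Rep_endo (exp (tau S))) x) = norm x"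
proof -
  define y where "y t = blinfun_apply (Rep_endo (exp (t *\<^sub>R tau S))) x" for t
  have yd: "(y has_vector_derivative (S *v y t)) (at t)" for t
  proof -
    have 1: "((\<lambda>t. exp (t *\<^sub>R tau S)) has_derivative (\<lambda>h. h *\<^sub>R (tau S * exp (t *\<^sub>R tau S)))) (at t)"
      using exp_scaleR_has_vector_derivative_left by (simp add: has_vector_derivative_def)
    have 2: "bounded_linear (\<lambda>e. blinfun_apply (Rep_endo e) x)" by (rule bounded_linear_endo_apply)
    have "(y has_derivative (\<lambda>h. blinfun_apply (Rep_endo (h *\<^sub>R (tau S * exp (t *\<^sub>R tau S)))) x)) (at t)"
      unfolding y_def using has_derivative_compose[OF 1 bounded_linear_imp_has_derivative[OF 2]] by simp
    moreover have "blinfun_apply (Rep_endo (h *\<^sub>R (tau S * exp (t *\<^sub>R tau S)))) x = h *\<^sub>R (S *v y t)" for h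
      by (simp add: y_def Rep_endo_scaleR Rep_endo_mult blinfun.scaleR_left)
    ultimately show ?thesis by (simp add: has_vector_derivative_def)
  qed
  define g where "g t = inner (y t) (y t)" for t
  have "DERIV g t :> 0" for t
  proof -
    have "(g has_derivative (\<lambda>h. inner (y t) (h *\<^sub>R (S *v y t)) + inner (h *\<^sub>R (S *v y t)) (y t))) (at t)"
      unfolding g_def using yd[of t] unfolding has_vector_derivative_def
      by (intro has_derivative_inner) auto
    moreover have "inner (y t) (h *\<^sub>R (S *v y t)) + inner (h *\<^sub>R (S *v y t)) (y t) = 0 * h" for h
      using skew_inner_zero[OF skew, of "y t"] by (simp add: inner_commute)
    moreover have "((*) (0::real)) = (\<lambda>h. 0)" by auto
    ultimately show ?thesis by (simp add: has_field_derivative_def)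
  qed
  then have "g 1 = g 0" by (intro DERIV_isconst_all) auto
  moreover have "y 0 = x" by (simp add: y_def Rep_endo_one)
  ultimately have "inner (y 1) (y 1) = inner x x" by (simp add: g_def)
  then have "norm (y 1) = norm x" by (simp add: norm_eq_sqrt_inner)
  then show ?thesis by (simp add: y_def)
qed

lemma exp_skew_norm_le:
  fixes S :: "real^'n^'n" assumes skew: "transpose S = - S"
  shows "norm (exp (tau S)) \<le> 1"
proof -
  have "norm (Rep_endo (exp (tau S))) \<le> 1"
    by (rule norm_blinfun_bound) (auto simp: exp_skew_isometry[OF skew])
  then show ?thesis by (simp add: norm_Rep_endo)
qed

definition thetaf :: "real \<Rightarrow> real \<Rightarrow> real \<Rightarrow> real" where
  "thetaf t0 T s = max t0 (min T s)"

definition Ptay :: "nat \<Rightarrow> 'a::{real_normed_algebra_1,banach} \<Rightarrow> real \<Rightarrow> 'a" where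
  "Ptay m L u = (\<Sum>i\<le>m. (u ^ i / fact i) *\<^sub>R L ^ i)"

definition Etay :: "'a::{real_normed_algebra_1,banach} \<Rightarrow> real \<Rightarrow> real \<Rightarrow> nat \<Rightarrow> real \<Rightarrow> 'a" where
  "Etay L t0 T m s = Ptay m L (s - thetaf t0 T s) * exp ((thetaf t0 T s - t0) *\<^sub>R L)"

lemma Ptay_0: "Ptay 0 L u = 1" by (simp add: Ptay_def)
lemma Ptay_Suc: "Ptay (Suc m) L u = Ptay m L u + (u ^ Suc m / fact (Suc m)) *\<^sub>R L ^ Suc m"
  by (simp add: Ptay_def)
lemma Ptay_zero: "Ptay m L 0 = 1"
  by (induct m) (simp_all add: Ptay_0 Ptay_Suc)

lemma term_deriv:
  "((\<lambda>u. (u ^ Suc n / fact (Suc n)) *\<^sub>R X) has_vector_derivative ((u ^ n / fact n) *\<^sub>R X)) (at u)"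
proof -
  have "((\<lambda>u::real. u ^ Suc n) has_real_derivative (real (Suc n) * u ^ n)) (at u)"
    using DERIV_pow[of "Suc n" u] by simp
  then have "((\<lambda>u::real. u ^ Suc n / fact (Suc n)) has_real_derivative (real (Suc n) * u ^ n / fact (Suc n))) (at u)"
    by (rule DERIV_cdivide)
  moreover have "real (Suc n) * u ^ n / fact (Suc n) = u ^ n / fact n"
    by (simp add: fact_Suc field_simps del: of_nat_Suc)
  ultimately have d: "((\<lambda>u::real. u ^ Suc n / fact (Suc n)) has_real_derivative (u ^ n / fact n)) (at u)" by simp
  show ?thesis using has_vector_derivative_scaleR[OF d has_vector_derivative_const[of X]] by simp
qed

lemma Ptay_deriv: "((\<lambda>u. Ptay (Suc m) L u) has_vector_derivative (L * Ptay m L u)) (at u)"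
proof (induct m)
  case 0
  have "(\<lambda>u. Ptay (Suc 0) L u) = (\<lambda>u. 1 + (u ^ Suc 0 / fact (Suc 0)) *\<^sub>R L ^ Suc 0)"
    by (simp add: Ptay_Suc Ptay_0)
  moreover have "((\<lambda>u. 1 + (u ^ Suc 0 / fact (Suc 0)) *\<^sub>R L ^ Suc 0) has_vector_derivative (0 + (u ^ 0 / fact 0) *\<^sub>R L ^ Suc 0)) (at u)"
    by (intro has_vector_derivative_add has_vector_derivative_const term_deriv)
  ultimately show ?case by (simp add: Ptay_0)
next
  case (Suc m)
  have "(\<lambda>u. Ptay (Suc (Suc m)) L u) = (\<lambda>u. Ptay (Suc m) L u + (u ^ Suc (Suc m) / fact (Suc (Suc m))) *\<^sub>R L ^ Suc (Suc m))"
    by (simp add: Ptay_Suc[of "Suc m"])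
  moreover have "((\<lambda>u. Ptay (Suc m) L u + (u ^ Suc (Suc m) / fact (Suc (Suc m))) *\<^sub>R L ^ Suc (Suc m)) has_vector_derivative
      (L * Ptay m L u + (u ^ Suc m / fact (Suc m)) *\<^sub>R L ^ Suc (Suc m))) (at u)"
    by (intro has_vector_derivative_add Suc term_deriv)
  moreover have "L * Ptay m L u + (u ^ Suc m / fact (Suc m)) *\<^sub>R L ^ Suc (Suc m) = L * Ptay (Suc m) L u"
    by (simp add: Ptay_Suc[of m] distrib_left mult_scaleR_right)
  ultimately show ?case by simp
qed

lemma thetaf_mid: "t0 \<le> s \<Longrightarrow> s \<le> T \<Longrightarrow> thetaf t0 T s = s" by (simp add: thetaf_def)
lemma thetaf_left: "s \<le> t0 \<Longrightarrow> t0 \<le> T \<Longrightarrow> thetaf t0 T s = t0" by (simp add: thetaf_def)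
lemma thetaf_right: "T \<le> s \<Longrightarrow> t0 \<le> T \<Longrightarrow> thetaf t0 T s = T" by (simp add: thetaf_def)

lemma Etay_mid: "t0 \<le> s \<Longrightarrow> s \<le> T \<Longrightarrow> Etay L t0 T m s = exp ((s - t0) *\<^sub>R L)"
  by (simp add: Etay_def thetaf_mid Ptay_zero)
lemma Etay_left: "s \<le> t0 \<Longrightarrow> t0 \<le> T \<Longrightarrow> Etay L t0 T m s = Ptay m L (s - t0)"
  by (simp add: Etay_def thetaf_left)
lemma Etay_right: "T \<le> s \<Longrightarrow> t0 \<le> T \<Longrightarrow> Etay L t0 T m s = Ptay m L (s - T) * exp ((T - t0) *\<^sub>R L)"
  by (simp add: Etay_def thetaf_right)

lemma vd_glue:
  assumes "(f has_vector_derivative D) (at x within {..x})" "(f has_vector_derivative D) (at x within {x..})"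
  shows "(f has_vector_derivative D) (at x)"
proof -
  have U: "{..x} \<union> {x..} = (UNIV :: real set)" by auto
  have "(f has_vector_derivative D) (at x within ({..x} \<union> {x..}))"
    using assms unfolding has_vector_derivative_def has_derivative_at_within Lim_within_Un by blast
  then show ?thesis by (simp add: U)
qed

lemma shift_deriv:
  assumes "(g has_vector_derivative g') (at (s - c))"
  shows "((\<lambda>u. g (u - c)) has_vector_derivative g') (at s)"
proof -
  have "((\<lambda>u::real. u - c) has_vector_derivative 1) (at s)"
    by (auto intro!: derivative_eq_intros)
  from vector_diff_chain_at[OF this] assms show ?thesis by (simp add: o_def)
qed

lemma Etay_deriv:
  fixes L :: "'a::{real_normed_algebra_1,banach}"
  assumes tT: "t0 < T"
  shows "(Etay L t0 T (Suc m) has_vector_derivative L * Etay L t0 T m s) (at s)"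
proof -
  define C where "C = exp ((T - t0) *\<^sub>R L)"
  have F1: "((\<lambda>u. Ptay (Suc m) L (u - t0)) has_vector_derivative L * Ptay m L (x - t0)) (at x)" for x
    by (rule shift_deriv[OF Ptay_deriv])
  have F2: "((\<lambda>u. exp ((u - t0) *\<^sub>R L)) has_vector_derivative L * exp ((x - t0) *\<^sub>R L)) (at x)" for x
    by (rule shift_deriv[OF exp_scaleR_has_vector_derivative_left])
  have F3: "((\<lambda>u. Ptay (Suc m) L (u - T) * C) has_vector_derivative L * Ptay m L (x - T) * C) (at x)" for x
    using has_vector_derivative_mult[OF shift_deriv[OF Ptay_deriv] has_vector_derivative_const[of C]]
    by simp
  consider "s < t0" | "s = t0" | "t0 < s" "s < T" | "s = T" | "T < s" using tT by linarith
  then show ?thesis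
  proof cases
    case 1
    have v: "L * Etay L t0 T m s = L * Ptay m L (s - t0)" using 1 tT by (simp add: Etay_left)
    show ?thesis unfolding v
    proof (rule has_vector_derivative_transform_within_open[OF F1[of s], of "{..<t0}"])
      show "Ptay (Suc m) L (y - t0) = Etay L t0 T (Suc m) y" if "y \<in> {..<t0}" for y
        using that tT by (simp add: Etay_left)
    qed (use 1 in auto)
  next
    case 2
    have v: "L * Etay L t0 T m s = L" using 2 tT by (simp add: Etay_left Ptay_zero)
    show ?thesis unfolding v
    proof (rule vd_glue)
      show "(Etay L t0 T (Suc m) has_vector_derivative L) (at s within {..s})"
      proof (rule has_vector_derivative_transform[of s "{..s}" _ "\<lambda>u. Ptay (Suc m) L (u - t0)"])
        show "Etay L t0 T (Suc m) x = Ptay (Suc m) L (x - t0)" if "x \<in> {..s}" for x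
          using that 2 tT by (simp add: Etay_left)
        show "((\<lambda>u. Ptay (Suc m) L (u - t0)) has_vector_derivative L) (at s within {..s})"
          using has_vector_derivative_at_within[OF F1[of s]] 2 by (simp add: Ptay_zero)
      qed simp
      show "(Etay L t0 T (Suc m) has_vector_derivative L) (at s within {s..})"
      proof (rule has_vector_derivative_transform_within[of "\<lambda>u. exp ((u - t0) *\<^sub>R L)" _ _ _ "T - t0"])
        show "((\<lambda>u. exp ((u - t0) *\<^sub>R L)) has_vector_derivative L) (at s within {s..})"
          using has_vector_derivative_at_within[OF F2[of s]] 2 by simp
        show "exp ((x' - t0) *\<^sub>R L) = Etay L t0 T (Suc m) x'" if "x' \<in> {s..}" "dist x' s < T - t0" for x'
          using that 2 by (simp add: Etay_mid dist_real_def)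
      qed (use tT in auto)
    qed
  next
    case 3
    have v: "L * Etay L t0 T m s = L * exp ((s - t0) *\<^sub>R L)" using 3 by (simp add: Etay_mid)
    show ?thesis unfolding v
    proof (rule has_vector_derivative_transform_within_open[OF F2[of s], of "{t0<..<T}"])
      show "exp ((y - t0) *\<^sub>R L) = Etay L t0 T (Suc m) y" if "y \<in> {t0<..<T}" for y
        using that by (simp add: Etay_mid)
    qed (use 3 in auto)
  next
    case 4
    have v: "L * Etay L t0 T m s = L * C" using 4 tT by (simp add: Etay_mid C_def)
    show ?thesis unfolding v
    proof (rule vd_glue)
      show "(Etay L t0 T (Suc m) has_vector_derivative L * C) (at s within {s..})"
      proof (rule has_vector_derivative_transform[of s "{s..}" _ "\<lambda>u. Ptay (Suc m) L (u - T) * C"])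
        show "Etay L t0 T (Suc m) x = Ptay (Suc m) L (x - T) * C" if "x \<in> {s..}" for x
          using that 4 tT by (simp add: Etay_right C_def)
        show "((\<lambda>u. Ptay (Suc m) L (u - T) * C) has_vector_derivative L * C) (at s within {s..})"
          using has_vector_derivative_at_within[OF F3[of s]] 4 by (simp add: Ptay_zero)
      qed simp
      show "(Etay L t0 T (Suc m) has_vector_derivative L * C) (at s within {..s})"
      proof (rule has_vector_derivative_transform_within[of "\<lambda>u. exp ((u - t0) *\<^sub>R L)" _ _ _ "T - t0"])
        show "((\<lambda>u. exp ((u - t0) *\<^sub>R L)) has_vector_derivative L * C) (at s within {..s})"
          using has_vector_derivative_at_within[OF F2[of s]] 4 by (simp add: C_def)
        show "exp ((x' - t0) *\<^sub>R L) = Etay L t0 T (Suc m) x'" if "x' \<in> {..s}" "dist x' s < T - t0" for x'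
          using that 4 by (simp add: Etay_mid dist_real_def)
      qed (use tT in auto)
    qed
  next
    case 5
    have v: "L * Etay L t0 T m s = L * Ptay m L (s - T) * C" using 5 tT by (simp add: Etay_right C_def mult.assoc)
    show ?thesis unfolding v
    proof (rule has_vector_derivative_transform_within_open[OF F3[of s], of "{T<..}"])
      show "Ptay (Suc m) L (y - T) * C = Etay L t0 T (Suc m) y" if "y \<in> {T<..}" for y
        using that tT by (simp add: Etay_right C_def)
    qed (use 5 in auto)
  qed
qed

lemma Ptay_bound:
  fixes L :: "'a::{real_normed_algebra_1,banach}"
  shows "norm (Ptay m L u) \<le> real (Suc m) * (1 + norm L) ^ m * (1 + \<bar>u\<bar>) ^ m"
proof -
  have t: "norm ((u ^ i / fact i) *\<^sub>R L ^ i) \<le> (1 + norm L) ^ m * (1 + \<bar>u\<bar>) ^ m" if "i \<le> m" for i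
  proof -
    have "norm ((u ^ i / fact i) *\<^sub>R L ^ i) = (\<bar>u\<bar> ^ i / fact i) * norm (L ^ i)"
      by (simp add: power_abs)
    also have "\<dots> \<le> (1 + \<bar>u\<bar>) ^ m * (1 + norm L) ^ m"
    proof (rule mult_mono)
      have "\<bar>u\<bar> ^ i / fact i \<le> \<bar>u\<bar> ^ i" by (simp add: divide_le_eq fact_ge_1 mult_le_cancel_left1)
      also have "\<dots> \<le> (1 + \<bar>u\<bar>) ^ i" by (intro power_mono) auto
      also have "\<dots> \<le> (1 + \<bar>u\<bar>) ^ m" using that by (intro power_increasing) auto
      finally show "\<bar>u\<bar> ^ i / fact i \<le> (1 + \<bar>u\<bar>) ^ m" .
      have "norm (L ^ i) \<le> norm L ^ i" by (rule norm_power_ineq)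
      also have "\<dots> \<le> (1 + norm L) ^ i" by (intro power_mono) auto
      also have "\<dots> \<le> (1 + norm L) ^ m" using that by (intro power_increasing) auto
      finally show "norm (L ^ i) \<le> (1 + norm L) ^ m" .
    qed auto
    finally show ?thesis by (simp add: mult.commute)
  qed
  have "norm (Ptay m L u) \<le> (\<Sum>i\<le>m. norm ((u ^ i / fact i) *\<^sub>R L ^ i))"
    unfolding Ptay_def by (rule norm_sum)
  also have "\<dots> \<le> (\<Sum>i\<le>m. (1 + norm L) ^ m * (1 + \<bar>u\<bar>) ^ m)"
    by (rule sum_mono) (use t in auto)
  also have "\<dots> = real (Suc m) * (1 + norm L) ^ m * (1 + \<bar>u\<bar>) ^ m" by simp
  finally show ?thesis .
qed

lemma Etay_bound:
  fixes L :: "'a::{real_normed_algebra_1,banach}"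
  assumes tT: "t0 \<le> T"
  shows "\<exists>B\<ge>0. \<forall>s. norm (Etay L t0 T m s) \<le> B * (1 + \<bar>s\<bar>) ^ m"
proof -
  define c where "c = \<bar>t0\<bar> + \<bar>T\<bar>"
  define B where "B = real (Suc m) * (1 + norm L) ^ m * (1 + c) ^ m * exp ((T - t0) * norm L)"
  have "norm (Etay L t0 T m s) \<le> B * (1 + \<bar>s\<bar>) ^ m" for s
  proof -
    define th where "th = thetaf t0 T s"
    have th: "t0 \<le> th" "th \<le> T" using tT by (auto simp: th_def thetaf_def)
    have "norm (Etay L t0 T m s) \<le> norm (Ptay m L (s - th)) * norm (exp ((th - t0) *\<^sub>R L))"
      unfolding Etay_def th_def[symmetric] by (rule norm_mult_ineq)
    also have "\<dots> \<le> (real (Suc m) * (1 + norm L) ^ m * ((1 + c) ^ m * (1 + \<bar>s\<bar>) ^ m)) * exp ((T - t0) * norm L)"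
    proof (rule mult_mono)
      have "1 + \<bar>s - th\<bar> \<le> (1 + c) * (1 + \<bar>s\<bar>)"
        using th by (simp add: c_def algebra_simps) (smt (verit) mult_nonneg_nonneg abs_ge_zero)
      then have "(1 + \<bar>s - th\<bar>) ^ m \<le> ((1 + c) * (1 + \<bar>s\<bar>)) ^ m" by (intro power_mono) auto
      then have "(1 + \<bar>s - th\<bar>) ^ m \<le> (1 + c) ^ m * (1 + \<bar>s\<bar>) ^ m" by (simp add: power_mult_distrib)
      then show "norm (Ptay m L (s - th)) \<le> real (Suc m) * (1 + norm L) ^ m * ((1 + c) ^ m * (1 + \<bar>s\<bar>) ^ m)"
        using Ptay_bound[of m L "s - th"] by (smt (verit) mult_left_mono mult_nonneg_nonneg of_nat_0_le_iff zero_le_power norm_ge_zero)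
      have "norm (exp ((th - t0) *\<^sub>R L)) \<le> exp (norm ((th - t0) *\<^sub>R L))" by (rule norm_exp)
      also have "\<dots> \<le> exp ((T - t0) * norm L)" using th by (simp add: mult_right_mono)
      finally show "norm (exp ((th - t0) *\<^sub>R L)) \<le> exp ((T - t0) * norm L)" .
      have "0 \<le> c" by (simp add: c_def)
      then show "0 \<le> real (Suc m) * (1 + norm L) ^ m * ((1 + c) ^ m * (1 + \<bar>s\<bar>) ^ m)" by simp
    qed auto
    also have "\<dots> = B * (1 + \<bar>s\<bar>) ^ m" by (simp add: B_def algebra_simps)
    finally show ?thesis .
  qed
  moreover have "B \<ge> 0" by (simp add: B_def c_def)
  ultimately show ?thesis by blast
qed

definition Rw :: "('m::finite \<Rightarrow> 'a::{real_normed_algebra_1,banach}) \<Rightarrow> ('m \<Rightarrow> real) \<Rightarrow> real^'m \<Rightarrow> 'a" where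
  "Rw Am ww w = exp (\<Sum>m\<in>UNIV. (w$m - ww m) *\<^sub>R Am m)"

definition Hf :: "'a::{real_normed_algebra_1,banach} \<Rightarrow> ('m::finite \<Rightarrow> 'a) \<Rightarrow> ('m \<Rightarrow> real) \<Rightarrow> real \<Rightarrow> real \<Rightarrow> 'a \<Rightarrow> 'a \<Rightarrow> nat
   \<Rightarrow> (real \<times> (real^'m)) \<times> 'c \<Rightarrow> 'a" where
  "Hf Lam Am ww t0 T C D m z = C * Etay Lam t0 T m (fst (fst z)) * D * Rw Am ww (snd (fst z))"

definition ent :: "(real^'d) endo \<Rightarrow> 'd \<Rightarrow> 'd \<Rightarrow> real" where
  "ent e j k = blinfun_apply (Rep_endo e) (axis k 1) $ j"

lemma ent_bound: fixes e :: "(real^'d) endo" shows "\<bar>ent e j k\<bar> \<le> norm e"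
proof -
  have "\<bar>ent e j k\<bar> \<le> norm (blinfun_apply (Rep_endo e) (axis k 1))"
    unfolding ent_def by (rule component_le_norm_cart)
  also have "\<dots> \<le> norm (Rep_endo e) * norm (axis k 1 :: real^'d)" by (rule norm_blinfun)
  finally show ?thesis by (simp add: norm_Rep_endo norm_axis_1)
qed

lemma bounded_linear_ent': "bounded_linear (\<lambda>e. ent e j k)"
  unfolding ent_def by (rule bounded_linear_ent)

lemma Rw_deriv:
  fixes Am :: "'m::finite \<Rightarrow> 'a::{real_normed_algebra_1,banach}"
  assumes commA: "\<And>i j. Am i * Am j = Am j * Am i"
  shows "(Rw Am c has_derivative (\<lambda>v. (\<Sum>m\<in>UNIV. (v$m) *\<^sub>R Am m) * Rw Am c x)) (at x)"
  unfolding Rw_def[abs_def] by (rule exp_sum_deriv[OF commA]) simp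

lemma Hf_deriv:
  fixes Am :: "'m::finite \<Rightarrow> 'a::{real_normed_algebra_1,banach}"
  assumes tT: "t0 < T" and commA: "\<And>i j. Am i * Am j = Am j * Am i"
  shows "(Hf Lam Am ww t0 T C D (Suc m) has_derivative
     (\<lambda>h. fst (fst h) *\<^sub>R Hf Lam Am ww t0 T (C * Lam) D m z
        + (\<Sum>i\<in>UNIV. (snd (fst h) $ i) *\<^sub>R Hf Lam Am ww t0 T C (D * Am i) (Suc m) z))) (at z)"
proof -
  let ?E = "\<lambda>m s. Etay Lam t0 T m s"
  let ?s = "\<lambda>z::(real \<times> (real^'m)) \<times> 'c. fst (fst z)"
  let ?w = "\<lambda>z::(real \<times> (real^'m)) \<times> 'c. snd (fst z)"
  have sd: "(?s has_derivative ?s) (at z)"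
    by (rule bounded_linear_imp_has_derivative) (intro bounded_linear_compose[OF bounded_linear_fst bounded_linear_fst])
  have wd: "(?w has_derivative ?w) (at z)"
    by (rule bounded_linear_imp_has_derivative) (intro bounded_linear_compose[OF bounded_linear_snd bounded_linear_fst])
  have Ed: "((\<lambda>z. ?E (Suc m) (?s z)) has_derivative (\<lambda>h. ?s h *\<^sub>R (Lam * ?E m (?s z)))) (at z)"
  proof -
    have "(?E (Suc m) has_derivative (\<lambda>h. h *\<^sub>R (Lam * ?E m (?s z)))) (at (?s z))"
      using Etay_deriv[OF tT, of Lam m "?s z"] by (simp add: has_vector_derivative_def)
    from has_derivative_compose[OF sd this] show ?thesis .
  qed
  have Rd: "((\<lambda>z. Rw Am ww (?w z)) has_derivative (\<lambda>h. (\<Sum>i\<in>UNIV. (?w h $ i) *\<^sub>R Am i) * Rw Am ww (?w z))) (at z)"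
    using has_derivative_compose[OF wd Rw_deriv[OF commA, where c=ww and x="?w z"]] .
  note P = has_derivative_mult[OF has_derivative_mult[OF has_derivative_mult[OF has_derivative_const Ed] has_derivative_const] Rd]
  show ?thesis
    unfolding Hf_def[abs_def]
    by (rule has_derivative_eq_rhs[OF P], rule ext)
      (simp add: sum_distrib_left sum_distrib_right mult.assoc mult_scaleR_left mult_scaleR_right add.commute)
qed

lemma ent_add: "ent (a + b) j k = ent a j k + ent b j k"
  by (simp add: ent_def Rep_endo_add blinfun.add_left)
lemma ent_scaleR: "ent (c *\<^sub>R a) j k = c * ent a j k"
  by (simp add: ent_def Rep_endo_scaleR blinfun.scaleR_left)
lemma ent_zero: "ent 0 j k = 0"
  by (simp add: ent_def zero_endo.rep_eq)
lemma ent_sum: "ent (\<Sum>i\<in>S. f i) j k = (\<Sum>i\<in>S. ent (f i) j k)"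
  by (induct S rule: infinite_finite_induct) (simp_all add: ent_add ent_zero)

lemma Hf_pb:
  fixes Am :: "'m::finite \<Rightarrow> (real^'d) endo" and Lam :: "(real^'d) endo"
  assumes tT: "t0 < T" and Rb: "\<And>w. norm (Rw Am ww w) \<le> 1"
  shows "pb (\<lambda>z::(real \<times> (real^'m)) \<times> 'c::euclidean_space. ent (Hf Lam Am ww t0 T C D m z) j k)"
proof -
  obtain B where B: "B \<ge> 0" "\<And>s. norm (Etay Lam t0 T m s) \<le> B * (1 + \<bar>s\<bar>) ^ m"
    using Etay_bound[of t0 T Lam m] tT by auto
  have "\<bar>ent (Hf Lam Am ww t0 T C D m z) j k\<bar> \<le> (norm C * B * norm D) * (1 + norm z) ^ m"
    for z :: "(real \<times> (real^'m)) \<times> 'c"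
  proof -
    let ?s = "fst (fst z)"
    have sz: "\<bar>?s\<bar> \<le> norm z"
      by (metis norm_fst_le order_trans prod.collapse real_norm_def)
    have "\<bar>ent (Hf Lam Am ww t0 T C D m z) j k\<bar> \<le> norm (Hf Lam Am ww t0 T C D m z)" by (rule ent_bound)
    also have "\<dots> \<le> norm C * norm (Etay Lam t0 T m ?s) * norm D * norm (Rw Am ww (snd (fst z)))"
      unfolding Hf_def by (intro order_trans[OF norm_mult_ineq] mult_mono norm_mult_ineq mult_nonneg_nonneg) auto
    also have "\<dots> \<le> norm C * (B * (1 + norm z) ^ m) * norm D * 1"
    proof (intro mult_mono mult_nonneg_nonneg Rb B(2) order_refl)
      have "(1 + \<bar>?s\<bar>) ^ m \<le> (1 + norm z) ^ m" using sz by (intro power_mono) auto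
      then show "norm (Etay Lam t0 T m ?s) \<le> B * (1 + norm z) ^ m"
        using B(2)[of ?s] mult_left_mono[OF _ B(1)] by (meson order_trans)
    qed (use B(1) in auto)
    finally show ?thesis by (simp add: algebra_simps)
  qed
  then show ?thesis unfolding pb_def by blast
qed

lemma ent_Hf_deriv:
  fixes Am :: "'m::finite \<Rightarrow> (real^'d) endo" and Lam :: "(real^'d) endo"
  assumes tT: "t0 < T" and commA: "\<And>i j. Am i * Am j = Am j * Am i"
  shows "((\<lambda>z::(real \<times> (real^'m)) \<times> 'c::euclidean_space. ent (Hf Lam Am ww t0 T C D (Suc m) z) j k) has_derivative
     (\<lambda>h. fst (fst h) * ent (Hf Lam Am ww t0 T (C * Lam) D m z) j k
        + (\<Sum>i\<in>UNIV. (snd (fst h) $ i) * ent (Hf Lam Am ww t0 T C (D * Am i) (Suc m) z) j k))) (at z)"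
proof -
  have "((\<lambda>z::(real \<times> (real^'m)) \<times> 'c. ent (Hf Lam Am ww t0 T C D (Suc m) z) j k) has_derivative
     (\<lambda>h. ent (fst (fst h) *\<^sub>R Hf Lam Am ww t0 T (C * Lam) D m z
        + (\<Sum>i\<in>UNIV. (snd (fst h) $ i) *\<^sub>R Hf Lam Am ww t0 T C (D * Am i) (Suc m) z)) j k)) (at z)"
    by (rule has_derivative_compose[OF Hf_deriv[OF tT commA] bounded_linear_imp_has_derivative[OF bounded_linear_ent']])
  then show ?thesis by (simp add: ent_add ent_scaleR ent_sum)
qed

lemma ent_class:
  fixes Am :: "'m::finite \<Rightarrow> (real^'d) endo" and Lam :: "(real^'d) endo"
  assumes tT: "t0 < T" and commA: "\<And>i j. Am i * Am j = Am j * Am i" and Rb: "\<And>w. norm (Rw Am ww w) \<le> 1"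
  shows "n < m \<Longrightarrow> (\<lambda>z::(real \<times> (real^'m)) \<times> 'c::euclidean_space. ent (Hf Lam Am ww t0 T C D m z) j k) \<in> CkP n"
proof (induct n arbitrary: m C D)
  case 0
  then obtain m' where m: "m = Suc m'" by (cases m) auto
  have "\<forall>z. (\<lambda>z::(real \<times> (real^'m)) \<times> 'c. ent (Hf Lam Am ww t0 T C D (Suc m') z) j k) differentiable (at z)"
    unfolding differentiable_def using ent_Hf_deriv[where Am=Am and ww=ww and Lam=Lam, OF tT commA] by blast
  then have "continuous_on UNIV (\<lambda>z::(real \<times> (real^'m)) \<times> 'c. ent (Hf Lam Am ww t0 T C D m z) j k)"
    unfolding m by (intro differentiable_imp_continuous_on) (simp add: differentiable_on_def)
  then show ?case using Hf_pb[OF tT Rb] by (simp add: poly_bounded_pb)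
next
  case (Suc n)
  then obtain m' where m: "m = Suc m'" and nm: "n < m'" by (cases m) auto
  show ?case unfolding m
  proof (rule CkP_SucI[OF Hf_pb[OF tT Rb] ent_Hf_deriv[where Am=Am and ww=ww and Lam=Lam, OF tT commA]])
    fix i :: "(real \<times> (real^'m)) \<times> 'c" assume "i \<in> Basis"
    show "(\<lambda>z::(real \<times> (real^'m)) \<times> 'c. fst (fst i) * ent (Hf Lam Am ww t0 T (C * Lam) D m' z) j k
        + (\<Sum>l\<in>UNIV. (snd (fst i) $ l) * ent (Hf Lam Am ww t0 T C (D * Am l) (Suc m') z) j k)) \<in> CkP n"
    proof -
      have h1: "(\<lambda>z::(real \<times> (real^'m)) \<times> 'c. ent (Hf Lam Am ww t0 T (C * Lam) D m' z) j k) \<in> CkP n"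
        by (rule Suc.hyps) (rule nm)
      have h2: "(\<lambda>z::(real \<times> (real^'m)) \<times> 'c. ent (Hf Lam Am ww t0 T C (D * Am l) (Suc m') z) j k) \<in> CkP n" for l
        by (rule Suc.hyps) (use nm in simp)
      show ?thesis by (rule CkP_add[OF CkP_cmult[OF h1] CkP_sum]) (auto intro: CkP_cmult h2)
    qed
  qed
qed

lemma apply_component:
  "blinfun_apply B (x::real^'n) $ j = (\<Sum>k\<in>UNIV. x $ k * (blinfun_apply B (axis k 1) $ j))"
proof -
  have "x = (\<Sum>k\<in>UNIV. x $ k *\<^sub>R axis k 1)" using basis_expansion[of x] by (simp add: scalar_mult_eq_scaleR)
  then have "blinfun_apply B x = blinfun_apply B (\<Sum>k\<in>UNIV. x $ k *\<^sub>R axis k 1)" by simp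
  also have "\<dots> = (\<Sum>k\<in>UNIV. x $ k *\<^sub>R blinfun_apply B (axis k 1))"
    by (simp only: blinfun.sum_right blinfun.scaleR_right)
  finally have "blinfun_apply B x = (\<Sum>k\<in>UNIV. x $ k *\<^sub>R blinfun_apply B (axis k 1))" .
  then show ?thesis by simp
qed

lemma Phi_components:
  fixes Am :: "'m::finite \<Rightarrow> (real^'d) endo" and Lam :: "(real^'d) endo"
  assumes tT: "t0 < T" and commA: "\<And>i j. Am i * Am j = Am j * Am i" and Rb: "\<And>w. norm (Rw Am ww w) \<le> 1"
  assumes b: "b \<in> Basis"
  shows "(\<lambda>z::(real \<times> (real^'m)) \<times> (real^'d). blinfun_apply (Rep_endo (Hf Lam Am ww t0 T 1 1 (Suc K) z)) (snd z) \<bullet> b) \<in> CkP K"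
proof -
  obtain j where bj: "b = axis j 1" using b by (auto simp: Basis_vec_def)
  have eq: "blinfun_apply (Rep_endo (Hf Lam Am ww t0 T 1 1 (Suc K) z)) (snd z) \<bullet> b
     = (\<Sum>k\<in>UNIV. snd z $ k * ent (Hf Lam Am ww t0 T 1 1 (Suc K) z) j k)" for z :: "(real \<times> (real^'m)) \<times> (real^'d)"
  proof -
    have "blinfun_apply (Rep_endo (Hf Lam Am ww t0 T 1 1 (Suc K) z)) (snd z) \<bullet> b
        = blinfun_apply (Rep_endo (Hf Lam Am ww t0 T 1 1 (Suc K) z)) (snd z) $ j"
      unfolding bj by (simp add: inner_axis)
    also have "\<dots> = (\<Sum>k\<in>UNIV. snd z $ k * (blinfun_apply (Rep_endo (Hf Lam Am ww t0 T 1 1 (Suc K) z)) (axis k 1) $ j))"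
      by (rule apply_component)
    finally show ?thesis by (simp only: ent_def)
  qed
  have lin: "bounded_linear (\<lambda>z::(real \<times> (real^'m)) \<times> (real^'d). snd z $ k)" for k
    by (intro bounded_linear_compose[OF bounded_linear_vec_nth bounded_linear_snd])
  have e: "(\<lambda>z::(real \<times> (real^'m)) \<times> (real^'d). ent (Hf Lam Am ww t0 T 1 1 (Suc K) z) j k) \<in> CkP K" for k
    by (rule ent_class[OF tT commA Rb]) simp
  show ?thesis unfolding eq
    by (rule CkP_sum) (auto intro: CkP_mult[OF CkP_linear[OF lin] e])
qed

lemma skew_sum:
  fixes A :: "'m::finite \<Rightarrow> real^'n^'n"
  assumes skew: "\<And>m. transpose (A m) = - A m"
  shows "transpose (\<Sum>m\<in>UNIV. c m *\<^sub>R A m) = - (\<Sum>m\<in>UNIV. c m *\<^sub>R A m)"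
proof -
  have e: "A m $ j $ i = - (A m $ i $ j)" for m i j
  proof -
    have "transpose (A m) $ i $ j = (- A m) $ i $ j" using skew[of m] by simp
    then show ?thesis by (simp add: transpose_def)
  qed
  have "transpose (\<Sum>m\<in>UNIV. c m *\<^sub>R A m) $ i $ j = (- (\<Sum>m\<in>UNIV. c m *\<^sub>R A m)) $ i $ j" for i j
  proof -
    have "transpose (\<Sum>m\<in>UNIV. c m *\<^sub>R A m) $ i $ j = (\<Sum>m\<in>UNIV. c m * (A m $ j $ i))"
      by (simp add: transpose_def)
    also have "\<dots> = (\<Sum>m\<in>UNIV. c m * (- (A m $ i $ j)))"
      by (intro sum.cong refl) (simp only: e[of _ i j])
    also have "\<dots> = (- (\<Sum>m\<in>UNIV. c m *\<^sub>R A m)) $ i $ j" by (simp add: sum_negf)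
    finally show ?thesis .
  qed
  then show ?thesis by (simp add: vec_eq_iff)
qed

lemma Rw_tau: "Rw (\<lambda>m. tau (A m)) c w = exp (tau (\<Sum>m\<in>UNIV. (w$m - c m) *\<^sub>R A m))"
  by (simp add: Rw_def tau_sum tau_scaleR)

lemma Hf_mid:
  fixes A :: "'m::finite \<Rightarrow> real^'n^'n" and Lm :: "real^'n^'n"
  assumes "t0 \<le> s" "s \<le> T" and cm: "\<And>m. Lm ** A m = A m ** Lm"
  shows "Hf (tau Lm) (\<lambda>m. tau (A m)) c t0 T 1 1 k ((s, w), y)
       = exp (tau ((s - t0) *\<^sub>R Lm + (\<Sum>m\<in>UNIV. (w$m - c m) *\<^sub>R A m)))"
proof -
  have cc: "((s - t0) *\<^sub>R tau Lm) * tau (\<Sum>m\<in>UNIV. (w$m - c m) *\<^sub>R A m)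
      = tau (\<Sum>m\<in>UNIV. (w$m - c m) *\<^sub>R A m) * ((s - t0) *\<^sub>R tau Lm)"
    unfolding tau_sum tau_scaleR
    by (rule comm_sum) (simp add: mult_scaleR_left mult_scaleR_right tau_mult[symmetric] cm)
  have "Hf (tau Lm) (\<lambda>m. tau (A m)) c t0 T 1 1 k ((s, w), y)
      = exp ((s - t0) *\<^sub>R tau Lm) * exp (tau (\<Sum>m\<in>UNIV. (w$m - c m) *\<^sub>R A m))"
    using assms by (simp add: Hf_def Etay_mid Rw_tau)
  also have "\<dots> = exp ((s - t0) *\<^sub>R tau Lm + tau (\<Sum>m\<in>UNIV. (w$m - c m) *\<^sub>R A m))"
    by (rule exp_add_commuting[OF cc, symmetric])
  finally show ?thesis by (simp add: tau_add tau_scaleR)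
qed

theorem lemma3:
  fixes P :: "'w measure"
    and t0 T :: real
    and w0 :: "'m::finite \<Rightarrow> real"
    and W :: "'m \<Rightarrow> real \<Rightarrow> 'w \<Rightarrow> real"
    and A0 :: "real^'d^'d"
    and A :: "'m \<Rightarrow> real^'d^'d"
    and g0 :: "real \<Rightarrow> real^'d \<Rightarrow> real^'d"
    and g :: "'m \<Rightarrow> real \<Rightarrow> real^'d \<Rightarrow> real^'d"
    and \<gamma> :: real
    and x0 :: "real^'d"
    and X :: "real \<Rightarrow> 'w \<Rightarrow> real^'d"
    and Wn :: "nat \<Rightarrow> nat \<Rightarrow> 'w \<Rightarrow> real \<times> (real^'m)"
    and Vn :: "nat \<Rightarrow> nat \<Rightarrow> 'w \<Rightarrow> real^'d"
    and p :: nat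
    and f :: "real^'d \<Rightarrow> real"
  defines "h \<equiv> \<lambda>N::nat. (T - t0) / real N"
    and "tg \<equiv> \<lambda>N n::nat. t0 + real n * ((T - t0) / real N)"
    and "Wv \<equiv> \<lambda>t \<omega>. (t, \<chi> m. W m t \<omega>)"
    and "\<Lambda> \<equiv> A0 - \<gamma> *\<^sub>R (\<Sum>m\<in>UNIV. A m ** A m)"
    and "L0 \<equiv> \<lambda>t \<omega>. (t - t0) *\<^sub>R (A0 - \<gamma> *\<^sub>R (\<Sum>m\<in>UNIV. A m ** A m))
                      + (\<Sum>m\<in>UNIV. (W m t \<omega> - w0 m) *\<^sub>R A m)"
  assumes prob: "prob_space P"
    and tT: "t0 < T"
    and wiener: "indep_wiener P t0 T w0 W"
    and calc: "\<gamma> = 1/2 \<or> \<gamma> = 0"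
    and comm0: "\<And>m. A0 ** A m = A m ** A0"
    and comm: "\<And>m m'. A m ** A m' = A m' ** A m"
    and skew: "\<And>m. transpose (A m) = - A m"
    and Xrv: "\<And>t. t \<in> {t0..T} \<Longrightarrow> X t \<in> borel_measurable P"
    and Xinit: "\<And>\<omega>. \<omega> \<in> space P \<Longrightarrow> X t0 \<omega> = x0"
    and Wn_rv: "\<And>N n. Wn N n \<in> borel_measurable P"
    and Vn_rv: "\<And>N n. Vn N n \<in> borel_measurable P"
    and Wn_time: "\<And>N n \<omega>. \<omega> \<in> space P \<Longrightarrow> fst (Wn N n \<omega>) = tg N n"
    and Wn_init: "\<And>N \<omega>. \<omega> \<in> space P \<Longrightarrow> Wn N 0 \<omega> = Wv t0 \<omega>"
    and weak: "\<And>G :: (real \<times> (real^'m)) \<times> (real^'d) \<Rightarrow> real. G \<in> CkP (2 * (p + 1)) \<Longrightarrow>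
        \<exists>c::real. \<forall>N n. 0 < N \<and> n \<le> N \<longrightarrow>
          \<bar>(\<integral>\<omega>. G (Wn N n \<omega>, Vn N n \<omega>) \<partial>P)
            - (\<integral>\<omega>. G (Wv (tg N n) \<omega>, mexp (- L0 (tg N n) \<omega>) *v X (tg N n) \<omega>) \<partial>P)\<bar>
          \<le> c * h N ^ p"
    and fC: "f \<in> CkP (2 * (p + 1))"
  shows "\<exists>c'::real. \<forall>N n. 0 < N \<and> n \<le> N \<longrightarrow>
          \<bar>(\<integral>\<omega>. f (mexp ((tg N n - t0) *\<^sub>R \<Lambda>
                       + (\<Sum>m\<in>UNIV. (snd (Wn N n \<omega>) $ m - snd (Wn N 0 \<omega>) $ m) *\<^sub>R A m))
                     *v Vn N n \<omega>) \<partial>P)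
            - (\<integral>\<omega>. f (X (tg N n) \<omega>) \<partial>P)\<bar>
          \<le> c' * h N ^ p"
proof -
  define K where "K = 2 * (p + 1)"
  define Lam' where "Lam' = tau \<Lambda>"
  define Am' where "Am' = (\<lambda>m. tau (A m))"
  have commA: "\<And>i j. Am' i * Am' j = Am' j * Am' i"
    using comm by (simp add: Am'_def tau_mult[symmetric])
  have cm: "\<Lambda> ** A m = A m ** \<Lambda>" for m
  proof (rule tau_inj)
    let ?X = "tau (A m)"
    have tL: "tau \<Lambda> = tau A0 - \<gamma> *\<^sub>R (\<Sum>i\<in>UNIV. tau (A i) * tau (A i))"
      by (simp add: \<Lambda>_def tau_diff tau_scaleR tau_sum tau_mult)
    have c0: "tau A0 * ?X = ?X * tau A0" using comm0[of m] by (simp add: tau_mult[symmetric])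
    have ci: "(tau (A i) * tau (A i)) * ?X = ?X * (tau (A i) * tau (A i))" for i
    proof -
      have ci1: "tau (A i) * ?X = ?X * tau (A i)" using comm[of i m] by (simp add: tau_mult[symmetric])
      have "(tau (A i) * tau (A i)) * ?X = tau (A i) * (tau (A i) * ?X)" by (simp add: mult.assoc)
      also have "\<dots> = tau (A i) * (?X * tau (A i))" by (simp add: ci1)
      also have "\<dots> = (tau (A i) * ?X) * tau (A i)" by (simp add: mult.assoc)
      also have "\<dots> = (?X * tau (A i)) * tau (A i)" by (simp add: ci1)
      finally show ?thesis by (simp add: mult.assoc)
    qed
    have cs: "(\<Sum>i\<in>UNIV. tau (A i) * tau (A i)) * ?X = ?X * (\<Sum>i\<in>UNIV. tau (A i) * tau (A i))"
      by (simp add: sum_distrib_left sum_distrib_right ci)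
    show "tau (\<Lambda> ** A m) = tau (A m ** \<Lambda>)"
      unfolding tau_mult tL
      by (simp add: left_diff_distrib right_diff_distrib c0 mult_scaleR_left mult_scaleR_right cs)
  qed
  have Rb: "norm (Rw Am' w0 w) \<le> 1" for w
    unfolding Am'_def Rw_tau
    by (rule exp_skew_norm_le) (rule skew_sum[OF skew])
  define G where "G = (\<lambda>z::(real \<times> (real^'m)) \<times> (real^'d).
      f (blinfun_apply (Rep_endo (Hf Lam' Am' w0 t0 T 1 1 (Suc K) z)) (snd z)))"
  have GC: "G \<in> CkP (2 * (p + 1))"
    unfolding G_def K_def[symmetric]
    by (rule CkP_compose[OF Phi_components[OF tT commA Rb] fC[folded K_def]])
  obtain c where c: "\<forall>N n. 0 < N \<and> n \<le> N \<longrightarrow>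
          \<bar>(\<integral>\<omega>. G (Wn N n \<omega>, Vn N n \<omega>) \<partial>P)
            - (\<integral>\<omega>. G (Wv (tg N n) \<omega>, mexp (- L0 (tg N n) \<omega>) *v X (tg N n) \<omega>) \<partial>P)\<bar>
          \<le> c * h N ^ p"
    using weak[OF GC] by blast
  have w0all: "\<forall>m. \<forall>\<omega>\<in>space P. W m t0 \<omega> = w0 m"
    using wiener unfolding indep_wiener_def by (rule conjunct1[OF conjunct2])
  have w0init: "W m t0 \<omega> = w0 m" if "\<omega> \<in> space P" for m \<omega>
    using w0all that by blast
  have Gmid: "G ((s, w), y) = f (blinfun_apply (Rep_endo (exp (tau ((s - t0) *\<^sub>R \<Lambda> + (\<Sum>m\<in>UNIV. (w$m - w0 m) *\<^sub>R A m))))) y)"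
    if "t0 \<le> s" "s \<le> T" for s w y
    unfolding G_def Lam'_def Am'_def using Hf_mid[where A=A and Lm="\<Lambda>" and c=w0 and k="Suc K" and w=w and y=y, OF that cm] by simp
  show ?thesis
  proof (intro exI[of _ c] allI impI)
    fix N n :: nat assume Nn: "0 < N \<and> n \<le> N"
    have tg: "t0 \<le> tg N n" "tg N n \<le> T"
    proof -
      have "real n / real N \<le> 1" using Nn by simp
      then have "(T - t0) * (real n / real N) \<le> (T - t0) * 1"
        using tT by (intro mult_left_mono) auto
      then have "real n * ((T - t0) / real N) \<le> T - t0" by (simp add: field_simps)
      then show "tg N n \<le> T" by (simp add: tg_def)
      show "t0 \<le> tg N n" using tT Nn by (simp add: tg_def)
    qed
    have I1: "(\<integral>\<omega>. G (Wn N n \<omega>, Vn N n \<omega>) \<partial>P) =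
      (\<integral>\<omega>. f (mexp ((tg N n - t0) *\<^sub>R \<Lambda>
                       + (\<Sum>m\<in>UNIV. (snd (Wn N n \<omega>) $ m - snd (Wn N 0 \<omega>) $ m) *\<^sub>R A m))
                     *v Vn N n \<omega>) \<partial>P)"
    proof (rule Bochner_Integration.integral_cong[OF refl])
      fix \<omega> assume om: "\<omega> \<in> space P"
      have e1: "Wn N n \<omega> = (tg N n, snd (Wn N n \<omega>))" using Wn_time[OF om, of N n] by (metis prod.collapse)
      have e2: "snd (Wn N 0 \<omega>) $ m = w0 m" for m using Wn_init[OF om, of N] w0init[OF om] by (simp add: Wv_def)
      show "G (Wn N n \<omega>, Vn N n \<omega>) = f (mexp ((tg N n - t0) *\<^sub>R \<Lambda>
                       + (\<Sum>m\<in>UNIV. (snd (Wn N n \<omega>) $ m - snd (Wn N 0 \<omega>) $ m) *\<^sub>R A m))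
                     *v Vn N n \<omega>)"
        by (subst e1) (simp add: Gmid[OF tg] e2 mexp_apply)
    qed
    have I2: "(\<integral>\<omega>. G (Wv (tg N n) \<omega>, mexp (- L0 (tg N n) \<omega>) *v X (tg N n) \<omega>) \<partial>P) =
      (\<integral>\<omega>. f (X (tg N n) \<omega>) \<partial>P)"
    proof (rule Bochner_Integration.integral_cong[OF refl])
      fix \<omega> assume om: "\<omega> \<in> space P"
      let ?L = "L0 (tg N n) \<omega>"
      have L: "(tg N n - t0) *\<^sub>R \<Lambda> + (\<Sum>m\<in>UNIV. ((\<chi> m. W m (tg N n) \<omega>) $ m - w0 m) *\<^sub>R A m) = ?L"
        by (simp add: L0_def \<Lambda>_def)
      have "G (Wv (tg N n) \<omega>, mexp (- ?L) *v X (tg N n) \<omega>)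
          = f (blinfun_apply (Rep_endo (exp (tau ?L))) (mexp (- ?L) *v X (tg N n) \<omega>))"
        unfolding Wv_def using Gmid[OF tg, of "\<chi> m. W m (tg N n) \<omega>"] L by simp
      also have "blinfun_apply (Rep_endo (exp (tau ?L))) (mexp (- ?L) *v X (tg N n) \<omega>) = X (tg N n) \<omega>"
        by (simp add: mexp_apply tau_minus Rep_endo_mult[symmetric] exp_minus_inverse Rep_endo_one)
      finally show "G (Wv (tg N n) \<omega>, mexp (- ?L) *v X (tg N n) \<omega>) = f (X (tg N n) \<omega>)" .
    qed
    show "\<bar>(\<integral>\<omega>. f (mexp ((tg N n - t0) *\<^sub>R \<Lambda>
                       + (\<Sum>m\<in>UNIV. (snd (Wn N n \<omega>) $ m - snd (Wn N 0 \<omega>) $ m) *\<^sub>R A m))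
                     *v Vn N n \<omega>) \<partial>P)
            - (\<integral>\<omega>. f (X (tg N n) \<omega>) \<partial>P)\<bar>
          \<le> c * h N ^ p"
      using c Nn unfolding I1[symmetric] I2[symmetric] by blast
  qed
qed

end
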